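(* Let $\mathcal{G}=\langle S,A,T,s_0,F\rangle$ be a two-player turn-based deterministic reachability game, let $X,Y\subseteq\mathrm{Win}_2(\mathcal{G},F)\setminus F$ with $X\cap Y=\emptyset$, and let $s\in\mathrm{Win}_2(\mathcal{G},F)\setminus(F\cup Y)$. Then the set of actions at $s$ that are subjectively rationalizable for P2 under the almost-sure winning condition in $\mathcal{G}$ (with goal $F$) is equal to the set of actions at $s$ that are subjectively rationalizable for P2 under the almost-sure winning condition in P2's perceptual game $\mathcal{G}^2_{X,Y}$ (with goal $F\cup Y$).
   Context: A two-player turn-based deterministic reachability game is a tuple $\mathcal{G}=\langle S,A,T,s_0,F\rangle$: $S$ finite, partitioned into P1 states $S_1$ and P2 states $S_2$; $A=A_1\cup A_2$ (P1 and P2 actions); $T:(S_1\times A_1)\cup(S_2\times A_2)\to S$ deterministic, possibly partial ($a$ enabled at $s$ iff $T(s,a)$ defined; every state has an enabled action); $s_0$ initial; $F\subseteq S$ a set of sink states (P2's goal). For a target $R\subseteq S$: $Z_0=R$, $Z_{k+1}=Z_k\cup\{s\in S_1:T(s,a)\in Z_k\ \forall\text{ enabled }a\}\cup\{s\in S_2:T(s,a)\in Z_k\text{ for some enabled }a\}$, and $\mathrm{Win}_2(\mathcal{G},R)=\bigcup_kZ_k$ (P2's sure/almost-sure winning region for reaching $R$). P2's perceptual game $\mathcal{G}^2_{X,Y}=\langle S,A,T,s_0,F\cup Y\rangle$ has the same transitions $T$ and goal set $F\cup Y$. In a game with transitions $T$ and P2-goal $R$, the set of actions at a state $q$ that are subjectively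 rationalizable for P2 under the almost-sure winning condition is: if $q\in S_2\cap\mathrm{Win}_2(\mathcal{G},R)\setminus R$, the set $\{a\text{ enabled at }q:T(q,a)\in\mathrm{Win}_2(\mathcal{G},R)\}$; otherwise (P1 states and P2 states outside $\mathrm{Win}_2(\mathcal{G},R)\setminus R$), all actions enabled at $q$. *)

theory Defs
  imports Main
begin

text \<open>A two-player turn-based deterministic reachability game
  G = (S, A, T, s0, F), S partitioned into S1 (P1) and S2 (P2),
  A = A1 \<union> A2; the partial deterministic transition function is
  modelled as T :: 's \<Rightarrow> 'a \<Rightarrow> 's option
  (action a enabled at s iff T s a \<noteq> None).\<close>

record ('s, 'a) game =
  st1 :: "'s set"
  st2 :: "'s set"
  act1 :: "'a set"
  act2 :: "'a set"
  trans :: "'s \<Rightarrow> 'a \<Rightarrow> 's option"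
  init :: 's
  goal :: "'s set"

definition states :: "('s, 'a) game \<Rightarrow> 's set" where
  "states G = st1 G \<union> st2 G"

definition enabled :: "('s, 'a) game \<Rightarrow> 's \<Rightarrow> 'a \<Rightarrow> bool" where
  "enabled G s a \<longleftrightarrow> trans G s a \<noteq> None"

definition well_formed_game :: "('s, 'a) game \<Rightarrow> bool" where
  "well_formed_game G \<longleftrightarrow>
     finite (states G) \<and>
     st1 G \<inter> st2 G = {} \<and>
     (\<forall>s a. enabled G s a \<longrightarrow>
        (s \<in> st1 G \<and> a \<in> act1 G) \<or> (s \<in> st2 G \<and> a \<in> act2 G)) \<and>
     (\<forall>s a t. trans G s a = Some t \<longrightarrow> t \<in> states G) \<and>
     (\<forall>s \<in> states G. \<exists>a. enabled G s a) \<and>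
     init G \<in> states G \<and>
     goal G \<subseteq> states G \<and>
     (\<forall>f \<in> goal G. \<forall>a t. trans G f a = Some t \<longrightarrow> t = f)"

fun Zk :: "('s, 'a) game \<Rightarrow> 's set \<Rightarrow> nat \<Rightarrow> 's set" where
  "Zk G R 0 = R"
| "Zk G R (Suc k) = Zk G R k
     \<union> {s \<in> st1 G. \<forall>a t. trans G s a = Some t \<longrightarrow> t \<in> Zk G R k}
     \<union> {s \<in> st2 G. \<exists>a t. trans G s a = Some t \<and> t \<in> Zk G R k}"

definition Win2 :: "('s, 'a) game \<Rightarrow> 's set \<Rightarrow> 's set" where
  "Win2 G R = (\<Union>k. Zk G R k)"

definition perceptual_game2 :: "('s, 'a) game \<Rightarrow> 's set \<Rightarrow> 's set \<Rightarrow> ('s, 'a) game" where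
  "perceptual_game2 G X Y = G\<lparr>goal := goal G \<union> Y\<rparr>"

definition subj_rat_AS :: "('s, 'a) game \<Rightarrow> 's \<Rightarrow> 'a set" where
  "subj_rat_AS G q =
     (if q \<in> st2 G \<inter> (Win2 G (goal G) - goal G)
      then {a. enabled G q a \<and> the (trans G q a) \<in> Win2 G (goal G)}
      else {a. enabled G q a})"

end

theory Submission
  imports Defs
begin

lemma Zk_goal: "Zk (G\<lparr>goal := x\<rparr>) R k = Zk G R k"
  by (induction k) auto

lemma Zk_mono: "i \<le> j \<Longrightarrow> Zk G R i \<subseteq> Zk G R j"
proof (induction j)
  case 0 then show ?case by simp
next
  case (Suc j) then show ?case by (cases "i = Suc j") auto
qed

lemma Zk_sub_Win2:
  assumes wf: "well_formed_game G" and R: "R \<subseteq> Win2 G F"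
  shows "Zk G R k \<subseteq> Win2 G F"
proof (induction k)
  case 0 then show ?case using R by simp
next
  case (Suc k)
  have fin: "finite (states G)" using wf unfolding well_formed_game_def by blast
  have st: "\<And>s a t. trans G s a = Some t \<Longrightarrow> t \<in> states G"
    using wf unfolding well_formed_game_def by blast
  have A: "s \<in> Win2 G F" if s1: "s \<in> st1 G" and all: "\<forall>a t. trans G s a = Some t \<longrightarrow> t \<in> Zk G R k" for s
  proof -
    define U where "U = {t. \<exists>a. trans G s a = Some t}"
    have "U \<subseteq> states G" using st unfolding U_def by blast
    then have Ufin: "finite U" using fin by (rule finite_subset)
    have "\<forall>t\<in>U. \<exists>j. t \<in> Zk G F j" using all Suc unfolding U_def Win2_def by blast
    then have "\<exists>f. \<forall>t\<in>U. t \<in> Zk G F (f t)" by (rule bchoice)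
    then obtain f where f: "\<forall>t\<in>U. t \<in> Zk G F (f t)" by (elim exE)
    define K where "K = Max (insert 0 (f ` U))"
    have "\<forall>t\<in>U. t \<in> Zk G F K"
    proof
      fix t assume "t \<in> U"
      then have "f t \<le> K" unfolding K_def using Ufin by simp
      then show "t \<in> Zk G F K" by (rule subsetD[OF Zk_mono bspec[OF f \<open>t \<in> U\<close>]])
    qed
    then have "\<forall>a t. trans G s a = Some t \<longrightarrow> t \<in> Zk G F K" unfolding U_def by blast
    then have "s \<in> Zk G F (Suc K)" using s1 by simp
    then show ?thesis unfolding Win2_def by blast
  qed
  have B: "s \<in> Win2 G F" if s2: "s \<in> st2 G" and ex: "trans G s a = Some t" and t: "t \<in> Zk G R k" for s a t
  proof -
    obtain j where "t \<in> Zk G F j" using t Suc unfolding Win2_def by blast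
    then have "s \<in> Zk G F (Suc j)" using s2 ex by simp blast
    then show ?thesis unfolding Win2_def by blast
  qed
  show ?case
  proof
    fix s assume "s \<in> Zk G R (Suc k)"
    then consider "s \<in> Zk G R k"
      | "s \<in> st1 G" "\<forall>a t. trans G s a = Some t \<longrightarrow> t \<in> Zk G R k"
      | a t where "s \<in> st2 G" "trans G s a = Some t" "t \<in> Zk G R k"
      by auto
    then show "s \<in> Win2 G F"
    proof cases
      case 1 then show ?thesis using Suc.IH by blast
    next
      case 2 then show ?thesis by (rule A)
    next
      case 3 then show ?thesis by (rule B)
    qed
  qed
qed

theorem lemma3:
  fixes G :: "('s, 'a) game" and X Y :: "'s set" and s :: 's
  assumes "well_formed_game G"
    and "X \<subseteq> Win2 G (goal G) - goal G"
    and "Y \<subseteq> Win2 G (goal G) - goal G"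
    and "X \<inter> Y = {}"
    and "s \<in> Win2 G (goal G) - (goal G \<union> Y)"
  shows "subj_rat_AS G s = subj_rat_AS (perceptual_game2 G X Y) s"
proof -
  let ?G' = "perceptual_game2 G X Y"
  have FW: "goal G \<subseteq> Win2 G (goal G)"
  proof
    fix x assume "x \<in> goal G"
    then have "x \<in> Zk G (goal G) 0" by simp
    then show "x \<in> Win2 G (goal G)" unfolding Win2_def by blast
  qed
  have R: "goal G \<union> Y \<subseteq> Win2 G (goal G)" using FW assms(3) by blast
  have Z: "Zk ?G' (goal G \<union> Y) k = Zk G (goal G \<union> Y) k" for k
    unfolding perceptual_game2_def by (rule Zk_goal)
  have W: "Win2 ?G' (goal G \<union> Y) = Win2 G (goal G)"
  proof
    have "Zk G (goal G \<union> Y) k \<subseteq> Win2 G (goal G)" for k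
      by (rule Zk_sub_Win2[OF assms(1) R])
    then show "Win2 ?G' (goal G \<union> Y) \<subseteq> Win2 G (goal G)"
      unfolding Win2_def[of ?G'] Z by blast
    have "Zk G (goal G) k \<subseteq> Zk G (goal G \<union> Y) k" for k
      by (induction k) auto
    then show "Win2 G (goal G) \<subseteq> Win2 ?G' (goal G \<union> Y)"
      unfolding Win2_def Z by blast
  qed
  have g: "goal ?G' = goal G \<union> Y" "st2 ?G' = st2 G" "trans ?G' = trans G"
    by (simp_all add: perceptual_game2_def)
  have e: "enabled ?G' = enabled G" unfolding enabled_def g by simp
  have c: "(s \<in> st2 G \<inter> (Win2 G (goal G) - (goal G \<union> Y))) = (s \<in> st2 G \<inter> (Win2 G (goal G) - goal G))"
    using assms(5) by blast
  show ?thesis unfolding subj_rat_AS_def g e W c ..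
qed

end
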